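(* Let $\mathcal{A}$ be a unital algebra over a field $F$ with $\operatorname{char}(F)\neq2$ and let $f\in\operatorname{QJDer}(\mathcal{A})$. Then $f\in\operatorname{JCent}(\mathcal{A})+\operatorname{JDer}(\mathcal{A})$ if and only if $f(1)\in Z_J(\mathcal{A})$.
   Context: $x\circ y=xy+yx$, $[x,y]=xy-yx$. $\operatorname{QJDer}(\mathcal{A})$: linear $f:\mathcal{A}\to\mathcal{A}$ for which there is a linear $h$ with $f(x)\circ y+x\circ f(y)=h(x\circ y)$ for all $x,y$. $\operatorname{JCent}(\mathcal{A})$: linear $f$ with $f(x\circ y)=f(x)\circ y$ for all $x,y$. $\operatorname{JDer}(\mathcal{A})$: linear $d$ with $d(x\circ y)=d(x)\circ y+x\circ d(y)$ for all $x,y$. $Z_J(\mathcal{A})=\{a: [[a,x],y]=0\ \forall x,y\in\mathcal{A}\}$. Sums of sets of maps are sets of pointwise sums. *)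

theory Defs
  imports Main
begin

definition is_algebra :: "('k::field \<Rightarrow> 'a::ring_1 \<Rightarrow> 'a) \<Rightarrow> bool" where
  "is_algebra sm \<longleftrightarrow>
     (\<forall>c x y. sm c (x + y) = sm c x + sm c y) \<and>
     (\<forall>c d x. sm (c + d) x = sm c x + sm d x) \<and>
     (\<forall>c d x. sm (c * d) x = sm c (sm d x)) \<and>
     (\<forall>x. sm 1 x = x) \<and>
     (\<forall>c x y. sm c (x * y) = sm c x * y) \<and>
     (\<forall>c x y. sm c (x * y) = x * sm c y)"

definition is_linear :: "('k::field \<Rightarrow> 'a::ring_1 \<Rightarrow> 'a) \<Rightarrow> ('a \<Rightarrow> 'a) \<Rightarrow> bool" where
  "is_linear sm f \<longleftrightarrow> (\<forall>x y. f (x + y) = f x + f y) \<and> (\<forall>c x. f (sm c x) = sm c (f x))"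

definition jprod :: "'a::ring_1 \<Rightarrow> 'a \<Rightarrow> 'a" where
  "jprod x y = x * y + y * x"

definition lbr :: "'a::ring_1 \<Rightarrow> 'a \<Rightarrow> 'a" where
  "lbr x y = x * y - y * x"

definition QJDer :: "('k::field \<Rightarrow> 'a::ring_1 \<Rightarrow> 'a) \<Rightarrow> ('a \<Rightarrow> 'a) set" where
  "QJDer sm = {f. is_linear sm f \<and>
     (\<exists>h. is_linear sm h \<and> (\<forall>x y. jprod (f x) y + jprod x (f y) = h (jprod x y)))}"

definition JCent :: "('k::field \<Rightarrow> 'a::ring_1 \<Rightarrow> 'a) \<Rightarrow> ('a \<Rightarrow> 'a) set" where
  "JCent sm = {f. is_linear sm f \<and> (\<forall>x y. f (jprod x y) = jprod (f x) y)}"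

definition JDer :: "('k::field \<Rightarrow> 'a::ring_1 \<Rightarrow> 'a) \<Rightarrow> ('a \<Rightarrow> 'a) set" where
  "JDer sm = {d. is_linear sm d \<and> (\<forall>x y. d (jprod x y) = jprod (d x) y + jprod x (d y))}"

definition ZJ :: "'a::ring_1 set" where
  "ZJ = {a. \<forall>x y. lbr (lbr a x) y = 0}"

definition map_sum :: "('a \<Rightarrow> 'b::plus) set \<Rightarrow> ('a \<Rightarrow> 'b) set \<Rightarrow> ('a \<Rightarrow> 'b) set" where
  "map_sum S T = {(\<lambda>x. f x + g x) | f g. f \<in> S \<and> g \<in> T}"

end

theory Submission
  imports Defs
begin

lemma alg_facts:
  fixes sm :: "'k::field \<Rightarrow> 'a::ring_1 \<Rightarrow> 'a"
  assumes "is_algebra sm"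
  shows sm_add: "sm c (x + y) = sm c x + sm c y"
    and sm_zero: "sm c 0 = 0"
    and sm_minus: "sm c (- x) = - sm c x"
    and sm_diff: "sm c (x - y) = sm c x - sm c y"
    and sm_mult: "sm (c * d) x = sm c (sm d x)"
    and sm_l: "sm c (x * y) = sm c x * y"
    and sm_r: "sm c (x * y) = x * sm c y"
    and sm_two: "sm 2 x = x + x"
    and sm_one: "sm 1 x = x"
proof -
  note A = assms[unfolded is_algebra_def]
  have 1: "sm c (x + y) = sm c x + sm c y" for c x y using A by blast
  have 0: "sm c 0 = 0" for c using A[THEN conjunct1, rule_format, of c 0 0] by simp
  have m: "sm c (- x) = - sm c x" for c x
    using 1[of c x "- x"] 0 by (metis add.commute neg_eq_iff_add_eq_0)
  show "sm c (x + y) = sm c x + sm c y" "sm c 0 = 0" "sm c (- x) = - sm c x" using 1 0 m by auto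
  show "sm c (x - y) = sm c x - sm c y" using 1[of c x "-y"] m[of c y] by simp
  show "sm (c * d) x = sm c (sm d x)" using A by blast
  show "sm c (x * y) = sm c x * y" using A by blast
  show "sm c (x * y) = x * sm c y" using A by blast
  show "sm 1 x = x" using A by blast
  have "sm (1 + 1) x = sm 1 x + sm 1 x" using A by blast
  thus "sm 2 x = x + x" using A by (simp add: one_add_one)
qed

lemma half_double:
  fixes sm :: "'k::field \<Rightarrow> 'a::ring_1 \<Rightarrow> 'a"
  assumes "is_algebra sm" "(2::'k) \<noteq> 0"
  shows "sm (inverse 2) (x + x) = x"
proof -
  have "sm (inverse 2) (x + x) = sm (inverse 2) (sm 2 x)" using sm_two[OF assms(1)] by simp
  also have "\<dots> = sm (inverse 2 * 2) x" using sm_mult[OF assms(1)] by metis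
  also have "\<dots> = x" using assms(2) sm_one[OF assms(1)] by (metis left_inverse)
  finally show ?thesis .
qed

lemma key_identity:
  fixes c x y :: "'a::ring_1"
  shows "c * jprod x y + jprod x y * c - jprod (c * x + x * c) y = lbr (lbr c y) x"
  unfolding jprod_def lbr_def by (simp add: algebra_simps)

theorem lemma4p1:
  fixes sm :: "'k::field \<Rightarrow> 'a::ring_1 \<Rightarrow> 'a" and f :: "'a \<Rightarrow> 'a"
  assumes "is_algebra sm"
    and "(2::'k) \<noteq> 0"
    and "f \<in> QJDer sm"
  shows "f \<in> map_sum (JCent sm) (JDer sm) \<longleftrightarrow> f 1 \<in> ZJ"
proof
  assume "f \<in> map_sum (JCent sm) (JDer sm)"
  then obtain g d where fgd: "f = (\<lambda>x. g x + d x)" and g: "g \<in> JCent sm" and d: "d \<in> JDer sm"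
    unfolding map_sum_def by blast
  have dlin: "is_linear sm d" and dd: "\<And>x y. d (jprod x y) = jprod (d x) y + jprod x (d y)"
    using d unfolding JDer_def by auto
  have glin: "is_linear sm g" and gg: "\<And>x y. g (jprod x y) = jprod (g x) y"
    using g unfolding JCent_def by auto
  have dadd: "\<And>x y. d (x + y) = d x + d y" using dlin unfolding is_linear_def by blast
  have gadd: "\<And>x y. g (x + y) = g x + g y" using glin unfolding is_linear_def by blast
  have "d 1 + d 1 = (d 1 + d 1) + (d 1 + d 1)"
    using dd[of 1 1] dadd[of 1 1] by (simp add: jprod_def algebra_simps)
  hence "d 1 + d 1 = 0" by simp
  hence d1: "d 1 = 0" using half_double[OF assms(1,2), of "d 1"] sm_zero[OF assms(1)] by metis
  define c where "c = g 1"
  have D: "\<And>z. g z + g z = c * z + z * c"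
    using gg[of 1] gadd unfolding c_def jprod_def by simp
  have "lbr (lbr c y) x = 0" for x y
  proof -
    have "c * jprod x y + jprod x y * c = g (jprod x y) + g (jprod x y)" using D by simp
    also have "\<dots> = jprod (g x + g x) y" using gg[of x y] by (simp add: jprod_def algebra_simps)
    also have "\<dots> = jprod (c * x + x * c) y" using D by simp
    finally show ?thesis using key_identity[of c x y] by simp
  qed
  hence "c \<in> ZJ" unfolding ZJ_def by blast
  thus "f 1 \<in> ZJ" using fgd d1 c_def by simp
next
  assume c: "f 1 \<in> ZJ"
  define c where "c = f 1"
  have cz: "\<And>x y. lbr (lbr c y) x = 0" using c unfolding c_def ZJ_def by blast
  obtain h where flin: "is_linear sm f" and hlin: "is_linear sm h"
    and fh: "\<And>x y. jprod (f x) y + jprod x (f y) = h (jprod x y)"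
    using assms(3) unfolding QJDer_def by blast
  have fadd: "\<And>x y. f (x + y) = f x + f y" using flin unfolding is_linear_def by blast
  have hadd: "\<And>x y. h (x + y) = h x + h y" using hlin unfolding is_linear_def by blast
  define half where "half = sm (inverse (2::'k))"
  have hd: "\<And>x. half (x + x) = x" unfolding half_def using half_double[OF assms(1,2)] by blast
  have hadd2: "\<And>x y. half (x + y) = half x + half y" unfolding half_def using sm_add[OF assms(1)] by blast
  have hdiff: "\<And>x y. half (x - y) = half x - half y" unfolding half_def using sm_diff[OF assms(1)] by blast
  define g where "g = (\<lambda>x. half (c * x + x * c))"
  define d where "d = (\<lambda>x. f x - g x)"
  have gadd: "g (x + y) = g x + g y" for x y
    unfolding g_def by (simp add: algebra_simps hadd2)
  have gsm: "g (sm a x) = sm a (g x)" for a x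
  proof -
    have "g (sm a x) = half (sm a (c * x) + sm a (x * c))"
      unfolding g_def using sm_l[OF assms(1), of a x c] sm_r[OF assms(1), of a c x] by simp
    also have "\<dots> = half (sm a (c * x + x * c))" using sm_add[OF assms(1), of a "c * x" "x * c"] by simp
    also have "\<dots> = sm (inverse 2 * a) (c * x + x * c)" unfolding half_def
      using sm_mult[OF assms(1), of "inverse 2" a] by simp
    also have "\<dots> = sm (a * inverse 2) (c * x + x * c)" by (simp add: mult.commute)
    also have "\<dots> = sm a (g x)" unfolding g_def half_def
      using sm_mult[OF assms(1), of a "inverse 2"] by simp
    finally show ?thesis .
  qed
  have glin: "is_linear sm g" unfolding is_linear_def using gadd gsm by blast
  have gg: "g (jprod x y) = jprod (g x) y" for x y
  proof -
    have "c * jprod x y + jprod x y * c = jprod (c * x + x * c) y"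
      using key_identity[of c x y] cz[of y x] by simp
    hence "g (jprod x y) = half (jprod (c * x + x * c) y)" unfolding g_def by simp
    also have "\<dots> = half ((c * x + x * c) * y) + half (y * (c * x + x * c))"
      unfolding jprod_def by (rule hadd2)
    also have "\<dots> = jprod (g x) y" unfolding g_def jprod_def half_def
      using sm_l[OF assms(1), of "inverse 2" "c * x + x * c" y] sm_r[OF assms(1), of "inverse 2" y "c * x + x * c"]
      by simp
    finally show ?thesis .
  qed
  have gsym: "g (jprod x y) = jprod x (g y)" for x y
    using gg[of y x] by (simp add: jprod_def add.commute)
  have hfg: "h x = f x + g x" for x
  proof -
    have "h x + h x = f x + f x + (c * x + x * c)"
      using fh[of x 1] hadd[of x x] by (simp add: jprod_def c_def algebra_simps)
    hence "half (h x + h x) = half (f x + f x) + g x" unfolding g_def by (simp add: hadd2)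
    thus ?thesis using hd by simp
  qed
  have flin': "\<And>a x. f (sm a x) = sm a (f x)" using flin unfolding is_linear_def by blast
  have dlin: "is_linear sm d" unfolding is_linear_def d_def
    using fadd gadd flin' gsm sm_diff[OF assms(1)] by (simp add: algebra_simps)
  have dd: "d (jprod x y) = jprod (d x) y + jprod x (d y)" for x y
  proof -
    have "f (jprod x y) = jprod (f x) y + jprod x (f y) - g (jprod x y)"
      using fh[of x y] hfg[of "jprod x y"] by simp
    thus ?thesis unfolding d_def using gg[of x y] gsym[of x y]
      by (simp add: jprod_def algebra_simps)
  qed
  have "g \<in> JCent sm" unfolding JCent_def using glin gg by blast
  moreover have "d \<in> JDer sm" unfolding JDer_def using dlin dd by blast
  moreover have "f = (\<lambda>x. g x + d x)" unfolding d_def by simp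
  ultimately show "f \<in> map_sum (JCent sm) (JDer sm)" unfolding map_sum_def by blast
qed

end
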